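(* Let $\mathcal{M}'$ be the set of all square matrices $(a_{i,j})$ of order at least $1$ with entries in $\{0,1\}$ such that: (1) $a_{i,i}=0$ for all $i$; (2) if $a_{i,j}=0$ then $a_{j,i}=1$ (for $i\neq j$); (3) if $a_{i,j}=a_{j,k}=0$ then $a_{i,k}=0$. Call $A,B\in\mathcal{M}'$ equivalent if there is a permutation matrix $E$ with $EAE^{-1}=B$, and let $\mathcal{M}$ be the set of equivalence classes. Then the map sending a nonempty finite $T_0$-space $X$ to the equivalence class of $X_M$ induces a bijection between the set of homeomorphism classes of nonempty finite $T_0$-spaces and $\mathcal{M}$.
   Context: A finite $T_0$-space $X$ is identified with a finite poset via $x\le y$ iff $U_x\subseteq U_y$, where $U_x$ is the intersection of all open sets containing $x$ (conversely, the down-sets of a finite poset form a $T_0$ topology); continuous maps are exactly order-preserving maps. For $X=\{x_1,\dots,x_n\}$ with a fixed labelling, $X_M=(x_{i,j})$ is the $n\times n$ matrix with $x_{i,j}=0$ if $x_i\le x_j$ and $x_{i,j}=1$ otherwise. *)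

theory Defs
  imports "HOL-Analysis.Analysis"
begin

(* Square matrices of order n are represented as functions nat => nat => int,
   only the entries with indices i, j < n being relevant. *)

definition min_open_nbhd :: "'a topology \<Rightarrow> 'a \<Rightarrow> 'a set" where
  "min_open_nbhd X x = \<Inter>{U. openin X U \<and> x \<in> U}"

definition spec_le :: "'a topology \<Rightarrow> 'a \<Rightarrow> 'a \<Rightarrow> bool" where
  "spec_le X x y \<longleftrightarrow> min_open_nbhd X x \<subseteq> min_open_nbhd X y"

definition space_matrix :: "'a topology \<Rightarrow> (nat \<Rightarrow> 'a) \<Rightarrow> nat \<Rightarrow> nat \<Rightarrow> int" where
  "space_matrix X lab i j = (if spec_le X (lab i) (lab j) then 0 else 1)"

definition finite_T0_space :: "'a topology \<Rightarrow> bool" where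
  "finite_T0_space X \<longleftrightarrow> finite (topspace X) \<and> topspace X \<noteq> {} \<and> t0_space X"

definition labelling :: "'a topology \<Rightarrow> (nat \<Rightarrow> 'a) \<Rightarrow> bool" where
  "labelling X lab \<longleftrightarrow> bij_betw lab {..<card (topspace X)} (topspace X)"

definition Mprime :: "(nat \<times> (nat \<Rightarrow> nat \<Rightarrow> int)) set" where
  "Mprime = {(n, A). n \<ge> 1
      \<and> (\<forall>i<n. \<forall>j<n. A i j \<in> {0, 1})
      \<and> (\<forall>i<n. A i i = 0)
      \<and> (\<forall>i<n. \<forall>j<n. i \<noteq> j \<longrightarrow> A i j = 0 \<longrightarrow> A j i = 1)
      \<and> (\<forall>i<n. \<forall>j<n. \<forall>k<n. A i j = 0 \<longrightarrow> A j k = 0 \<longrightarrow> A i k = 0)}"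

definition mat_mult :: "nat \<Rightarrow> (nat \<Rightarrow> nat \<Rightarrow> int) \<Rightarrow> (nat \<Rightarrow> nat \<Rightarrow> int) \<Rightarrow> nat \<Rightarrow> nat \<Rightarrow> int" where
  "mat_mult n A B i j = (\<Sum>k<n. A i k * B k j)"

definition mat_eq :: "nat \<Rightarrow> (nat \<Rightarrow> nat \<Rightarrow> int) \<Rightarrow> (nat \<Rightarrow> nat \<Rightarrow> int) \<Rightarrow> bool" where
  "mat_eq n A B \<longleftrightarrow> (\<forall>i<n. \<forall>j<n. A i j = B i j)"

definition id_mat :: "nat \<Rightarrow> nat \<Rightarrow> int" where
  "id_mat i j = (if i = j then 1 else 0)"

definition perm_matrix :: "nat \<Rightarrow> (nat \<Rightarrow> nat \<Rightarrow> int) \<Rightarrow> bool" where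
  "perm_matrix n E \<longleftrightarrow> (\<forall>i<n. \<forall>j<n. E i j \<in> {0, 1})
      \<and> (\<forall>i<n. \<exists>!j. j < n \<and> E i j = 1)
      \<and> (\<forall>j<n. \<exists>!i. i < n \<and> E i j = 1)"

definition mat_equiv :: "nat \<times> (nat \<Rightarrow> nat \<Rightarrow> int) \<Rightarrow> nat \<times> (nat \<Rightarrow> nat \<Rightarrow> int) \<Rightarrow> bool" where
  "mat_equiv P Q \<longleftrightarrow> fst P = fst Q \<and>
     (\<exists>E Einv. perm_matrix (fst P) E
        \<and> mat_eq (fst P) (mat_mult (fst P) E Einv) id_mat
        \<and> mat_eq (fst P) (mat_mult (fst P) Einv E) id_mat
        \<and> mat_eq (fst P) (mat_mult (fst P) (mat_mult (fst P) E (snd P)) Einv) (snd Q))"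

end

theory Submission
  imports Defs
begin

lemma spec_le_iff: "spec_le X x y \<longleftrightarrow> (\<forall>U. openin X U \<and> y \<in> U \<longrightarrow> x \<in> U)"
  unfolding spec_le_def min_open_nbhd_def by blast

lemma spec_le_refl: "spec_le X x x"
  unfolding spec_le_def by simp

lemma spec_le_trans: "spec_le X x y \<Longrightarrow> spec_le X y z \<Longrightarrow> spec_le X x z"
  unfolding spec_le_def by blast

lemma t0_antisym:
  assumes "t0_space X" "x \<in> topspace X" "y \<in> topspace X" "spec_le X x y" "spec_le X y x"
  shows "x = y"
  using assms unfolding t0_space_def spec_le_iff by metis

lemma homeo_spec_le:
  assumes h: "homeomorphic_map X Y h" and x: "x \<in> topspace X" and y: "y \<in> topspace X"
  shows "spec_le Y (h x) (h y) \<longleftrightarrow> spec_le X x y"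
proof
  assume L: "spec_le Y (h x) (h y)"
  show "spec_le X x y" unfolding spec_le_iff
  proof (intro allI impI)
    fix U assume U: "openin X U \<and> y \<in> U"
    then have "openin Y (h ` U)" using homeomorphic_map_openness[OF h] openin_subset by blast
    then have "h x \<in> h ` U" using L U unfolding spec_le_iff by blast
    moreover have "inj_on h (topspace X)" using homeomorphic_imp_injective_map[OF h] .
    ultimately show "x \<in> U" using x U openin_subset by (metis imageE inj_onD subsetD)
  qed
next
  assume R: "spec_le X x y"
  have c: "continuous_map X Y h" using h homeomorphic_imp_continuous_map by blast
  show "spec_le Y (h x) (h y)" unfolding spec_le_iff
  proof (intro allI impI)
    fix V assume V: "openin Y V \<and> h y \<in> V"
    then have "openin X {z \<in> topspace X. h z \<in> V}" using c V openin_continuous_map_preimage by blast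
    then show "h x \<in> V" using R V x y unfolding spec_le_iff by blast
  qed
qed

lemma finite_open_downclosed:
  assumes fin: "finite (topspace X)" and sub: "U \<subseteq> topspace X"
    and dc: "\<And>x y. y \<in> U \<Longrightarrow> x \<in> topspace X \<Longrightarrow> spec_le X x y \<Longrightarrow> x \<in> U"
  shows "openin X U"
proof -
  define N where "N y = \<Inter>{V. openin X V \<and> y \<in> V}" for y
  have Nopen: "openin X (N y)" if "y \<in> topspace X" for y
  proof -
    have "{V. openin X V \<and> y \<in> V} \<subseteq> Pow (topspace X)" using openin_subset by blast
    then have "finite {V. openin X V \<and> y \<in> V}" using fin by (meson finite_Pow_iff finite_subset)
    moreover have "topspace X \<in> {V. openin X V \<and> y \<in> V}" using that by simp
    ultimately show ?thesis unfolding N_def by (intro openin_Inter) auto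
  qed
  have "U = (\<Union>y\<in>U. N y \<inter> topspace X)"
  proof
    show "U \<subseteq> (\<Union>y\<in>U. N y \<inter> topspace X)" using sub unfolding N_def by blast
    show "(\<Union>y\<in>U. N y \<inter> topspace X) \<subseteq> U"
    proof
      fix z assume "z \<in> (\<Union>y\<in>U. N y \<inter> topspace X)"
      then obtain y where y: "y \<in> U" "z \<in> N y" "z \<in> topspace X" by blast
      have "spec_le X z y" using y(2) unfolding N_def spec_le_iff by blast
      then show "z \<in> U" using dc y by blast
    qed
  qed
  moreover have "openin X (\<Union>y\<in>U. N y \<inter> topspace X)"
    using Nopen sub by (intro openin_Union) auto
  ultimately show ?thesis by simp
qed

lemma order_pres_continuous:
  assumes fin: "finite (topspace X)" and img: "f ` topspace X \<subseteq> topspace Y"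
    and mono: "\<And>x y. x \<in> topspace X \<Longrightarrow> y \<in> topspace X \<Longrightarrow> spec_le X x y \<Longrightarrow> spec_le Y (f x) (f y)"
  shows "continuous_map X Y f"
  unfolding continuous_map
proof (intro conjI allI impI)
  show "f ` topspace X \<subseteq> topspace Y" using img by blast
  fix V assume V: "openin Y V"
  show "openin X {x \<in> topspace X. f x \<in> V}"
  proof (rule finite_open_downclosed[OF fin])
    fix x y assume "y \<in> {x \<in> topspace X. f x \<in> V}" "x \<in> topspace X" "spec_le X x y"
    then show "x \<in> {x \<in> topspace X. f x \<in> V}" using mono V unfolding spec_le_iff by blast
  qed auto
qed

lemma order_iso_homeomorphic:
  assumes finX: "finite (topspace X)" and finY: "finite (topspace Y)"
    and g: "bij_betw g (topspace Y) (topspace X)"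
    and iso: "\<And>y1 y2. y1 \<in> topspace Y \<Longrightarrow> y2 \<in> topspace Y \<Longrightarrow> spec_le X (g y1) (g y2) \<longleftrightarrow> spec_le Y y1 y2"
  shows "X homeomorphic_space Y"
proof -
  define f where "f = inv_into (topspace Y) g"
  have fb: "bij_betw f (topspace X) (topspace Y)" unfolding f_def using g by (rule bij_betw_inv_into)
  have gf: "g (f x) = x" if "x \<in> topspace X" for x
    unfolding f_def using g that by (meson bij_betw_inv_into_right)
  have fg: "f (g y) = y" if "y \<in> topspace Y" for y
    unfolding f_def using g that by (meson bij_betw_inv_into_left)
  have cg: "continuous_map Y X g"
    using finY g iso by (intro order_pres_continuous) (auto simp: bij_betw_def)
  have cf: "continuous_map X Y f"
  proof (rule order_pres_continuous[OF finX])
    show "f ` topspace X \<subseteq> topspace Y" using fb by (simp add: bij_betw_def)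
    fix x y assume xy: "x \<in> topspace X" "y \<in> topspace X" "spec_le X x y"
    then have "f x \<in> topspace Y" "f y \<in> topspace Y" using fb by (auto simp: bij_betw_def)
    then show "spec_le Y (f x) (f y)" using iso xy gf by metis
  qed
  have "homeomorphic_maps X Y f g" unfolding homeomorphic_maps_def using cf cg gf fg by blast
  then show ?thesis unfolding homeomorphic_space_def by blast
qed

definition pmat :: "(nat \<Rightarrow> nat) \<Rightarrow> nat \<Rightarrow> nat \<Rightarrow> int" where
  "pmat \<sigma> i j = (if j = \<sigma> i then 1 else 0)"

definition pmatinv :: "(nat \<Rightarrow> nat) \<Rightarrow> nat \<Rightarrow> nat \<Rightarrow> int" where
  "pmatinv \<sigma> i j = (if i = \<sigma> j then 1 else 0)"

lemma perm_conj:
  assumes s: "bij_betw \<sigma> {..<n} {..<n}"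
    and B: "\<And>i j. i < n \<Longrightarrow> j < n \<Longrightarrow> B i j = A (\<sigma> i) (\<sigma> j)"
  shows "mat_equiv (n, A) (n, B)"
proof -
  have sl: "\<sigma> i < n" if "i < n" for i using s that by (auto simp: bij_betw_def)
  have si: "\<sigma> i = \<sigma> j \<longleftrightarrow> i = j" if "i < n" "j < n" for i j
    using s that by (auto simp: bij_betw_def inj_on_def)
  have ss: "\<exists>k<n. \<sigma> k = i" if "i < n" for i
    using s that unfolding bij_betw_def by (metis imageE lessThan_iff)
  have P: "perm_matrix n (pmat \<sigma>)"
    unfolding perm_matrix_def pmat_def
  proof (intro conjI allI impI)
    fix j assume j: "j < n"
    then obtain k where k: "k < n" "\<sigma> k = j" using ss by blast
    show "\<exists>!i. i < n \<and> (if j = \<sigma> i then 1 else 0) = (1::int)"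
      using k si by (intro ex1I[of _ k]) (auto split: if_splits)
  qed (auto simp: sl)
  have M1: "mat_eq n (mat_mult n (pmat \<sigma>) (pmatinv \<sigma>)) id_mat"
    unfolding mat_eq_def mat_mult_def
  proof (intro allI impI)
    fix i j assume ij: "i < n" "j < n"
    have "(\<Sum>l<n. pmat \<sigma> i l * pmatinv \<sigma> l j) = (\<Sum>l<n. if l = \<sigma> i then pmatinv \<sigma> l j else 0)"
      unfolding pmat_def by (intro sum.cong) auto
    also have "\<dots> = pmatinv \<sigma> (\<sigma> i) j" using sl ij by simp
    also have "\<dots> = id_mat i j" using ij si unfolding pmatinv_def id_mat_def by auto
    finally show "(\<Sum>l<n. pmat \<sigma> i l * pmatinv \<sigma> l j) = id_mat i j" .
  qed
  have M2: "mat_eq n (mat_mult n (pmatinv \<sigma>) (pmat \<sigma>)) id_mat"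
    unfolding mat_eq_def mat_mult_def
  proof (intro allI impI)
    fix i j assume ij: "i < n" "j < n"
    obtain k where k: "k < n" "\<sigma> k = i" using ss ij by blast
    have "(\<Sum>l<n. pmatinv \<sigma> i l * pmat \<sigma> l j) = (\<Sum>l<n. if l = k then pmat \<sigma> l j else 0)"
      using k si unfolding pmatinv_def by (intro sum.cong) auto
    also have "\<dots> = pmat \<sigma> k j" using k by simp
    also have "\<dots> = id_mat i j" using k ij si unfolding pmat_def id_mat_def by auto
    finally show "(\<Sum>l<n. pmatinv \<sigma> i l * pmat \<sigma> l j) = id_mat i j" .
  qed
  have M3: "mat_eq n (mat_mult n (mat_mult n (pmat \<sigma>) A) (pmatinv \<sigma>)) B"
    unfolding mat_eq_def
  proof (intro allI impI)
    fix i j assume ij: "i < n" "j < n"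
    have r1: "mat_mult n (pmat \<sigma>) A i l = A (\<sigma> i) l" for l
    proof -
      have "mat_mult n (pmat \<sigma>) A i l = (\<Sum>k<n. if k = \<sigma> i then A k l else 0)"
        unfolding mat_mult_def pmat_def by (intro sum.cong) auto
      also have "\<dots> = A (\<sigma> i) l" using sl ij by simp
      finally show ?thesis .
    qed
    have "mat_mult n (mat_mult n (pmat \<sigma>) A) (pmatinv \<sigma>) i j = (\<Sum>l<n. if l = \<sigma> j then A (\<sigma> i) l else 0)"
      unfolding mat_mult_def[of n "mat_mult n (pmat \<sigma>) A"] r1 pmatinv_def by (intro sum.cong) auto
    also have "\<dots> = A (\<sigma> i) (\<sigma> j)" using sl ij by simp
    also have "\<dots> = B i j" using B ij by simp
    finally show "mat_mult n (mat_mult n (pmat \<sigma>) A) (pmatinv \<sigma>) i j = B i j" .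
  qed
  show ?thesis unfolding mat_equiv_def fst_conv snd_conv using P M1 M2 M3 by blast
qed

lemma ex1_uniq: "\<exists>!x. P x \<Longrightarrow> P a \<Longrightarrow> P b \<Longrightarrow> a = b"
  by blast

lemma mat_equiv_unfold:
  assumes "mat_equiv (n, A) (m, B)"
  shows "\<exists>E Einv. perm_matrix n E \<and> mat_eq n (mat_mult n E Einv) id_mat \<and> mat_eq n (mat_mult n (mat_mult n E A) Einv) B"
  using assms unfolding mat_equiv_def fst_conv snd_conv by (elim conjE exE) (intro exI conjI, assumption+)

lemma perm_extract:
  assumes "mat_equiv (n, A) (m, B)"
  shows "n = m \<and> (\<exists>\<sigma>. bij_betw \<sigma> {..<n} {..<n} \<and> (\<forall>i<n. \<forall>j<n. B i j = A (\<sigma> i) (\<sigma> j)))"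
proof -
  from assms have nm: "n = m" unfolding mat_equiv_def by simp
  from mat_equiv_unfold[OF assms] obtain E Einv where P: "perm_matrix n E"
    and M1: "mat_eq n (mat_mult n E Einv) id_mat"
    and M3: "mat_eq n (mat_mult n (mat_mult n E A) Einv) B"
    by blast
  define \<sigma> where "\<sigma> i = (THE j. j < n \<and> E i j = 1)" for i
  have PP: "(\<forall>i<n. \<forall>j<n. E i j \<in> {0, 1}) \<and> (\<forall>i<n. \<exists>!j. j < n \<and> E i j = 1) \<and> (\<forall>j<n. \<exists>!i. i < n \<and> E i j = 1)"
    using P unfolding perm_matrix_def .
  have e01: "\<forall>i<n. \<forall>j<n. E i j \<in> {0, 1}" using PP by (rule conjunct1)
  have ex1: "\<forall>i<n. \<exists>!j. j < n \<and> E i j = 1" using PP by (rule conjunct1[OF conjunct2])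
  have ex2: "\<forall>j<n. \<exists>!i. i < n \<and> E i j = 1" using PP by (rule conjunct2[OF conjunct2])
  have s1: "\<sigma> i < n \<and> E i (\<sigma> i) = 1" if "i < n" for i
    unfolding \<sigma>_def using theI'[OF ex1[rule_format, OF that]] .
  have Ei: "E i j = (if j = \<sigma> i then 1 else 0)" if "i < n" "j < n" for i j
  proof -
    have "E i j \<in> {0,1}" using e01 that by blast
    moreover have "E i j = 1 \<Longrightarrow> j = \<sigma> i"
      using ex1_uniq[of "\<lambda>j. j < n \<and> E i j = 1" j "\<sigma> i", OF ex1[rule_format, OF that(1)]] that s1[OF that(1)] by simp
    moreover have "E i (\<sigma> i) = 1" using s1[OF that(1)] by simp
    ultimately have H: "E i j \<in> {0,1}" "E i j = 1 \<Longrightarrow> j = \<sigma> i" "E i (\<sigma> i) = 1" by blast+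
    show ?thesis
    proof (cases "j = \<sigma> i")
      case True
      then show ?thesis using H(3) by simp
    next
      case False
      then have "E i j \<noteq> 1" using H(2) by blast
      then show ?thesis using H(1) False by simp
    qed
  qed
  have inj: "inj_on \<sigma> {..<n}"
  proof (rule inj_onI)
    fix i i' assume "i \<in> {..<n}" "i' \<in> {..<n}" "\<sigma> i = \<sigma> i'"
    then have a: "i < n" "i' < n" "\<sigma> i = \<sigma> i'" by auto
    have "\<sigma> i < n" using s1[OF a(1)] by simp
    then have "\<exists>!r. r < n \<and> E r (\<sigma> i) = 1" using ex2 by simp
    moreover have "E i (\<sigma> i) = 1" using s1[OF a(1)] by simp
    moreover have "E i' (\<sigma> i) = 1" using s1[OF a(2)] a(3) by simp
    ultimately show "i = i'" using a ex1_uniq[of "\<lambda>r. r < n \<and> E r (\<sigma> i) = 1" i i'] by simp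
  qed
  have bij: "bij_betw \<sigma> {..<n} {..<n}"
  proof -
    have "\<sigma> ` {..<n} \<subseteq> {..<n}" using s1 by auto
    moreover have "card (\<sigma> ` {..<n}) = card {..<n}" using inj by (simp add: card_image)
    ultimately have "\<sigma> ` {..<n} = {..<n}" by (simp add: card_subset_eq)
    then show ?thesis using inj by (simp add: bij_betw_def)
  qed
  have sl: "\<sigma> i < n" if "i < n" for i using s1 that by blast
  have rowsum: "(\<Sum>k<n. E i k * F k j) = F (\<sigma> i) j" if "i < n" for i j and F :: "nat \<Rightarrow> nat \<Rightarrow> int"
  proof -
    have "(\<Sum>k<n. E i k * F k j) = (\<Sum>k<n. if k = \<sigma> i then F k j else 0)"
    proof (rule sum.cong[OF refl])
      fix k assume "k \<in> {..<n}"
      then have "E i k = (if k = \<sigma> i then 1 else 0)" using Ei[OF that, of k] by simp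
      then show "E i k * F k j = (if k = \<sigma> i then F k j else 0)" by simp
    qed
    also have "\<dots> = F (\<sigma> i) j" using sl that by simp
    finally show ?thesis .
  qed
  have Einv: "Einv l j = (if l = \<sigma> j then 1 else 0)" if "l < n" "j < n" for l j
  proof -
    have "l \<in> \<sigma> ` {..<n}" using bij that by (simp add: bij_betw_def)
    then obtain i where i: "i < n" "\<sigma> i = l" by blast
    have "mat_mult n E Einv i j = id_mat i j" using M1 i that unfolding mat_eq_def by blast
    then have "Einv l j = id_mat i j" using i rowsum[of i Einv j] unfolding mat_mult_def by simp
    also have "\<dots> = (if l = \<sigma> j then 1 else 0)"
    proof -
      have "\<sigma> i = \<sigma> j \<longleftrightarrow> i = j" using inj i(1) that(2) unfolding inj_on_def by blast
      then show ?thesis using i(2) unfolding id_mat_def by simp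
    qed
    finally show ?thesis .
  qed
  have "B i j = A (\<sigma> i) (\<sigma> j)" if ij: "i < n" "j < n" for i j
  proof -
    have "B i j = mat_mult n (mat_mult n E A) Einv i j" using M3 ij unfolding mat_eq_def by simp
    also have "\<dots> = (\<Sum>l<n. mat_mult n E A i l * Einv l j)" by (simp add: mat_mult_def[of n "mat_mult n E A"])
    also have "\<dots> = (\<Sum>l<n. A (\<sigma> i) l * Einv l j)"
      using rowsum[OF ij(1), of A] unfolding mat_mult_def by simp
    also have "\<dots> = (\<Sum>l<n. if l = \<sigma> j then A (\<sigma> i) l else 0)"
      using Einv ij by (intro sum.cong) auto
    also have "\<dots> = A (\<sigma> i) (\<sigma> j)" using sl ij by simp
    finally show ?thesis .
  qed
  then show ?thesis using nm bij by blast
qed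


lemma part1:
  assumes F: "finite_T0_space X" and L: "labelling X lab"
  shows "(card (topspace X), space_matrix X lab) \<in> Mprime"
proof -
  define N where "N = card (topspace X)"
  have fin: "finite (topspace X)" and ne: "topspace X \<noteq> {}" and t0: "t0_space X"
    using F unfolding finite_T0_space_def by auto
  have b: "bij_betw lab {..<N} (topspace X)" using L unfolding labelling_def N_def .
  have N1: "N \<ge> 1" using fin ne unfolding N_def by (simp add: Suc_le_eq card_gt_0_iff)
  have labin: "lab i \<in> topspace X" if "i < N" for i using b that unfolding bij_betw_def by auto
  have labinj: "lab i = lab j \<Longrightarrow> i = j" if "i < N" "j < N" for i j
    using b that unfolding bij_betw_def inj_on_def by auto
  have c1: "\<forall>i<N. \<forall>j<N. space_matrix X lab i j \<in> {0, 1}" unfolding space_matrix_def by simp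
  have c2: "\<forall>i<N. space_matrix X lab i i = 0" unfolding space_matrix_def by (simp add: spec_le_refl)
  have c3: "\<forall>i<N. \<forall>j<N. i \<noteq> j \<longrightarrow> space_matrix X lab i j = 0 \<longrightarrow> space_matrix X lab j i = 1"
  proof (intro allI impI)
    fix i j assume ij: "i < N" "j < N" "i \<noteq> j" "space_matrix X lab i j = 0"
    then have "spec_le X (lab i) (lab j)" unfolding space_matrix_def by (simp split: if_splits)
    moreover have "lab i \<noteq> lab j" using labinj ij by blast
    ultimately have "\<not> spec_le X (lab j) (lab i)"
      using t0_antisym[OF t0 labin[OF ij(1)] labin[OF ij(2)]] by blast
    then show "space_matrix X lab j i = 1" unfolding space_matrix_def by simp
  qed
  have c4: "\<forall>i<N. \<forall>j<N. \<forall>k<N. space_matrix X lab i j = 0 \<longrightarrow> space_matrix X lab j k = 0 \<longrightarrow> space_matrix X lab i k = 0"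
  proof (intro allI impI)
    fix i j k assume a: "space_matrix X lab i j = 0" "space_matrix X lab j k = 0"
    then have "spec_le X (lab i) (lab j)" "spec_le X (lab j) (lab k)"
      unfolding space_matrix_def by (simp_all split: if_splits)
    then have "spec_le X (lab i) (lab k)" by (rule spec_le_trans)
    then show "space_matrix X lab i k = 0" unfolding space_matrix_def by simp
  qed
  have "(N, space_matrix X lab) \<in> Mprime"
    unfolding Mprime_def mem_Collect_eq case_prod_conv using N1 c1 c2 c3 c4 by blast
  then show ?thesis unfolding N_def .
qed

lemma part2a:
  assumes FX: "finite_T0_space X" and FY: "finite_T0_space Y"
    and LX: "labelling X labX" and LY: "labelling Y labY" and H: "X homeomorphic_space Y"
  shows "mat_equiv (card (topspace X), space_matrix X labX) (card (topspace Y), space_matrix Y labY)"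
proof -
  obtain h where h: "homeomorphic_map X Y h" using H homeomorphic_space by blast
  obtain g where hg: "homeomorphic_maps X Y h g" using h homeomorphic_map_maps by blast
  have g: "homeomorphic_map Y X g" using hg homeomorphic_maps_map by blast
  have gbij: "bij_betw g (topspace Y) (topspace X)"
    unfolding bij_betw_def using homeomorphic_imp_surjective_map[OF g] homeomorphic_imp_injective_map[OF g] by blast
  have cardeq: "card (topspace Y) = card (topspace X)" using bij_betw_same_card[OF gbij] .
  define n where "n = card (topspace X)"
  have bX: "bij_betw labX {..<n} (topspace X)" using LX unfolding labelling_def n_def .
  have bY: "bij_betw labY {..<n} (topspace Y)" using LY cardeq unfolding labelling_def n_def by simp
  define \<sigma> where "\<sigma> i = inv_into {..<n} labX (g (labY i))" for i
  have "bij_betw (inv_into {..<n} labX \<circ> (g \<circ> labY)) {..<n} {..<n}"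
    by (rule bij_betw_trans[OF bij_betw_trans[OF bY gbij] bij_betw_inv_into[OF bX]])
  moreover have "inv_into {..<n} labX \<circ> (g \<circ> labY) = \<sigma>" unfolding \<sigma>_def by (simp add: fun_eq_iff)
  ultimately have sb: "bij_betw \<sigma> {..<n} {..<n}" by simp
  have labs: "labX (\<sigma> i) = g (labY i)" if "i < n" for i
  proof -
    have "labY i \<in> topspace Y" using bY that unfolding bij_betw_def by auto
    then have "g (labY i) \<in> topspace X" using gbij unfolding bij_betw_def by auto
    then show ?thesis unfolding \<sigma>_def using bX by (simp add: bij_betw_inv_into_right)
  qed
  have inY: "labY i \<in> topspace Y" if "i < n" for i using bY that unfolding bij_betw_def by auto
  have "mat_equiv (n, space_matrix X labX) (n, space_matrix Y labY)"
  proof (rule perm_conj[OF sb])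
    fix i j assume ij: "i < n" "j < n"
    have "spec_le X (g (labY i)) (g (labY j)) \<longleftrightarrow> spec_le Y (labY i) (labY j)"
      by (rule homeo_spec_le[OF g inY[OF ij(1)] inY[OF ij(2)]])
    then show "space_matrix Y labY i j = space_matrix X labX (\<sigma> i) (\<sigma> j)"
      unfolding space_matrix_def using labs ij by simp
  qed
  then show ?thesis using cardeq unfolding n_def by simp
qed

lemma part2b:
  assumes FX: "finite_T0_space X" and FY: "finite_T0_space Y"
    and LX: "labelling X labX" and LY: "labelling Y labY"
    and M: "mat_equiv (card (topspace X), space_matrix X labX) (card (topspace Y), space_matrix Y labY)"
  shows "X homeomorphic_space Y"
proof -
  define n where "n = card (topspace X)"
  from perm_extract[OF M] obtain \<sigma> where nm: "card (topspace X) = card (topspace Y)"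
    and sb: "bij_betw \<sigma> {..<card (topspace X)} {..<card (topspace X)}"
    and B: "\<forall>i<card (topspace X). \<forall>j<card (topspace X). space_matrix Y labY i j = space_matrix X labX (\<sigma> i) (\<sigma> j)"
    by blast
  have bX: "bij_betw labX {..<n} (topspace X)" using LX unfolding labelling_def n_def .
  have bY: "bij_betw labY {..<n} (topspace Y)" using LY nm unfolding labelling_def n_def by simp
  have sb': "bij_betw \<sigma> {..<n} {..<n}" using sb unfolding n_def .
  define g where "g y = labX (\<sigma> (inv_into {..<n} labY y))" for y
  have "bij_betw (labX \<circ> (\<sigma> \<circ> inv_into {..<n} labY)) (topspace Y) (topspace X)"
    by (rule bij_betw_trans[OF bij_betw_trans[OF bij_betw_inv_into[OF bY] sb'] bX])
  moreover have "labX \<circ> (\<sigma> \<circ> inv_into {..<n} labY) = g" unfolding g_def by (simp add: fun_eq_iff)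
  ultimately have gb: "bij_betw g (topspace Y) (topspace X)" by simp
  have fX: "finite (topspace X)" and fY: "finite (topspace Y)" using FX FY unfolding finite_T0_space_def by auto
  show ?thesis
  proof (rule order_iso_homeomorphic[OF fX fY gb])
    fix y1 y2 assume y: "y1 \<in> topspace Y" "y2 \<in> topspace Y"
    define i where "i = inv_into {..<n} labY y1"
    define j where "j = inv_into {..<n} labY y2"
    have im: "labY ` {..<n} = topspace Y" using bY by (simp add: bij_betw_def)
    have "i \<in> {..<n}" unfolding i_def by (rule inv_into_into) (simp add: im y)
    moreover have "j \<in> {..<n}" unfolding j_def by (rule inv_into_into) (simp add: im y)
    ultimately have ij: "i < n" "j < n" by auto
    have li: "labY i = y1" "labY j = y2" unfolding i_def j_def using y im by (simp_all add: f_inv_into_f)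
    have "space_matrix Y labY i j = space_matrix X labX (\<sigma> i) (\<sigma> j)" using B ij unfolding n_def by (elim allE impE)
    then have "spec_le Y (labY i) (labY j) \<longleftrightarrow> spec_le X (labX (\<sigma> i)) (labX (\<sigma> j))"
      unfolding space_matrix_def by (simp split: if_splits)
    then show "spec_le X (g y1) (g y2) \<longleftrightarrow> spec_le Y y1 y2"
      unfolding g_def i_def[symmetric] j_def[symmetric] li by simp
  qed
qed

lemma t0_from_antisym:
  assumes "\<And>x y. x \<in> topspace X \<Longrightarrow> y \<in> topspace X \<Longrightarrow> spec_le X x y \<Longrightarrow> spec_le X y x \<Longrightarrow> x = y"
  shows "t0_space X"
  unfolding t0_space_def
proof (intro ballI impI)
  fix x y assume xy: "x \<in> topspace X" "y \<in> topspace X" "x \<noteq> y"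
  then have "\<not> spec_le X x y \<or> \<not> spec_le X y x" using assms by blast
  then show "\<exists>U. openin X U \<and> (x \<notin> U \<longleftrightarrow> y \<in> U)"
  proof
    assume "\<not> spec_le X x y"
    then obtain U where "openin X U" "y \<in> U" "x \<notin> U" unfolding spec_le_iff by blast
    then show ?thesis by blast
  next
    assume "\<not> spec_le X y x"
    then obtain U where "openin X U" "x \<in> U" "y \<notin> U" unfolding spec_le_iff by blast
    then show ?thesis by blast
  qed
qed

lemma part3:
  assumes A: "A \<in> Mprime"
  shows "\<exists>(X :: nat topology) lab. finite_T0_space X \<and> labelling X lab \<and>
        mat_equiv (card (topspace X), space_matrix X lab) A"
proof -
  obtain n M where AnM: "A = (n, M)" by (cases A)
  have n1: "n \<ge> 1" and c1: "\<forall>i<n. \<forall>j<n. M i j \<in> {0, 1}" and c2: "\<forall>i<n. M i i = 0"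
    and c3: "\<forall>i<n. \<forall>j<n. i \<noteq> j \<longrightarrow> M i j = 0 \<longrightarrow> M j i = 1"
    and c4: "\<forall>i<n. \<forall>j<n. \<forall>k<n. M i j = 0 \<longrightarrow> M j k = 0 \<longrightarrow> M i k = 0"
    using A unfolding AnM Mprime_def mem_Collect_eq case_prod_conv by blast+
  define P where "P U \<longleftrightarrow> U \<subseteq> {..<n} \<and> (\<forall>j\<in>U. \<forall>i<n. M i j = 0 \<longrightarrow> i \<in> U)" for U
  have isT: "istopology P" unfolding istopology_def
  proof (intro conjI allI impI)
    fix S T assume "P S" "P T" then show "P (S \<inter> T)" unfolding P_def by blast
  next
    fix K assume K: "\<forall>S\<in>K. P S"
    have "\<Union>K \<subseteq> {..<n}" using K unfolding P_def by blast
    moreover have "\<forall>j\<in>\<Union>K. \<forall>i<n. M i j = 0 \<longrightarrow> i \<in> \<Union>K"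
    proof (intro ballI allI impI)
      fix j i assume "j \<in> \<Union>K" "i < n" "M i j = 0"
      then obtain S where "S \<in> K" "j \<in> S" by blast
      then have "i \<in> S" using K \<open>i < n\<close> \<open>M i j = 0\<close> unfolding P_def by blast
      then show "i \<in> \<Union>K" using \<open>S \<in> K\<close> by blast
    qed
    ultimately show "P (\<Union>K)" unfolding P_def by blast
  qed
  define X where "X = topology P"
  have op: "openin X = P" unfolding X_def using isT by simp
  have PU: "P {..<n}" unfolding P_def by blast
  have top: "topspace X = {..<n}"
  proof
    show "topspace X \<subseteq> {..<n}" unfolding topspace_def op P_def by blast
    show "{..<n} \<subseteq> topspace X" using PU op openin_subset by metis
  qed
  have spec: "spec_le X i j \<longleftrightarrow> M i j = 0" if ij: "i < n" "j < n" for i j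
  proof
    assume "spec_le X i j"
    moreover have "P {k. k < n \<and> M k j = 0}" unfolding P_def
    proof (intro conjI ballI allI impI)
      show "{k. k < n \<and> M k j = 0} \<subseteq> {..<n}" by auto
      fix j' i assume "j' \<in> {k. k < n \<and> M k j = 0}" "i < n" "M i j' = 0"
      then show "i \<in> {k. k < n \<and> M k j = 0}" using c4 ij by blast
    qed
    moreover have "j \<in> {k. k < n \<and> M k j = 0}" using c2 ij by simp
    ultimately show "M i j = 0" unfolding spec_le_iff op by blast
  next
    assume "M i j = 0"
    then show "spec_le X i j" unfolding spec_le_iff op P_def using ij by blast
  qed
  have t0: "t0_space X"
  proof (rule t0_from_antisym)
    fix x y assume "x \<in> topspace X" "y \<in> topspace X" "spec_le X x y" "spec_le X y x"
    then have xy: "x < n" "y < n" "M x y = 0" "M y x = 0" using spec top by auto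
    show "x = y"
    proof (rule ccontr)
      assume "x \<noteq> y"
      then have "M y x = 1" using c3 xy by blast
      then show False using xy by simp
    qed
  qed
  have "(0::nat) \<in> {..<n}" using n1 by simp
  then have "{..<n} \<noteq> {}" by blast
  then have F: "finite_T0_space X" unfolding finite_T0_space_def top using t0 by simp
  have L: "labelling X id" unfolding labelling_def top by simp
  have "mat_equiv (n, space_matrix X id) (n, M)"
  proof (rule perm_conj[of id])
    show "bij_betw id {..<n} {..<n}" by simp
    fix i j assume ij: "i < n" "j < n"
    have "M i j \<in> {0, 1}" using c1 ij by blast
    then show "M i j = space_matrix X id (id i) (id j)" unfolding space_matrix_def using spec[OF ij] by auto
  qed
  then have "mat_equiv (card (topspace X), space_matrix X id) A" unfolding top AnM by simp
  then show ?thesis using F L by blast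
qed

theorem mainTheorem1:
  shows
   \<comment> \<open>the matrix of any labelled nonempty finite T0-space lies in M'\<close>
   "(\<forall>(X :: 'a topology) lab. finite_T0_space X \<and> labelling X lab \<longrightarrow>
        (card (topspace X), space_matrix X lab) \<in> Mprime)
   \<comment> \<open>well-defined and injective on homeomorphism classes\<close>
   \<and> (\<forall>(X :: 'a topology) (Y :: 'b topology) labX labY.
        finite_T0_space X \<and> finite_T0_space Y \<and> labelling X labX \<and> labelling Y labY \<longrightarrow>
        (X homeomorphic_space Y \<longleftrightarrow>
         mat_equiv (card (topspace X), space_matrix X labX) (card (topspace Y), space_matrix Y labY)))
   \<comment> \<open>surjective onto M\<close>
   \<and> (\<forall>A \<in> Mprime. \<exists>(X :: nat topology) lab. finite_T0_space X \<and> labelling X lab \<and>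
        mat_equiv (card (topspace X), space_matrix X lab) A)"
proof (intro conjI allI impI ballI)
  fix X :: "'a topology" and lab
  assume "finite_T0_space X \<and> labelling X lab"
  then show "(card (topspace X), space_matrix X lab) \<in> Mprime" using part1 by blast
next
  fix X :: "'a topology" and Y :: "'b topology" and labX labY
  assume a: "finite_T0_space X \<and> finite_T0_space Y \<and> labelling X labX \<and> labelling Y labY"
  show "X homeomorphic_space Y \<longleftrightarrow>
         mat_equiv (card (topspace X), space_matrix X labX) (card (topspace Y), space_matrix Y labY)"
    using part2a[of X Y labX labY] part2b[of X Y labX labY] a by blast
next
  fix A assume "A \<in> Mprime"
  then show "\<exists>(X :: nat topology) lab. finite_T0_space X \<and> labelling X lab \<and>
        mat_equiv (card (topspace X), space_matrix X lab) A" by (rule part3)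
qed

end
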